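(* Let $T(n)$ denote the number of fixed polyiamonds with $n$ cells. For all positive integers $\ell,m$, $T(\ell+m)\ge \frac{1}{3}\,T(\ell)\,T(m)$.
   Context: The triangular lattice is the tiling of the plane by equilateral triangles; its cells come in two orientations. A polyiamond with $n$ cells is a finite set of $n$ cells of the triangular lattice that is edge-connected, i.e. the graph on the cells in which two cells are adjacent when they share an edge is connected. Two polyiamonds are considered the same if one is a translate of the other (no rotations or reflections allowed); $T(n)$ is the number of such translation classes of polyiamonds with $n$ cells. *)

theory Defs
  imports Complex_Main
begin

text \<open>Cells of the triangular lattice: (x, y, False) is an up-pointing triangle,
 (x, y, True) a down-pointing one. Up (x,y) shares its three edges with
 down (x,y), down (x-1,y) and down (x,y-1).\<close>

type_synonym cell = "int \<times> int \<times> bool"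

definition tri_adj :: "cell \<Rightarrow> cell \<Rightarrow> bool" where
  "tri_adj c d \<longleftrightarrow>
     (case c of (x, y, False) \<Rightarrow> d \<in> {(x, y, True), (x - 1, y, True), (x, y - 1, True)}
              | (x, y, True) \<Rightarrow> d \<in> {(x, y, False), (x + 1, y, False), (x, y + 1, False)})"

definition edge_connected :: "cell set \<Rightarrow> bool" where
  "edge_connected P \<longleftrightarrow>
     (\<forall>c\<in>P. \<forall>d\<in>P. (c, d) \<in> ({(a, b). a \<in> P \<and> b \<in> P \<and> tri_adj a b})\<^sup>*)"

definition polyiamond :: "nat \<Rightarrow> cell set \<Rightarrow> bool" where
  "polyiamond n P \<longleftrightarrow> finite P \<and> card P = n \<and> edge_connected P"

definition translate :: "int \<times> int \<Rightarrow> cell set \<Rightarrow> cell set" where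
  "translate v P = (\<lambda>(x, y, t). (x + fst v, y + snd v, t)) ` P"

definition translation_equiv :: "(cell set \<times> cell set) set" where
  "translation_equiv = {(P, Q). \<exists>v. Q = translate v P}"

definition T :: "nat \<Rightarrow> nat" where
  "T n = card ({P. polyiamond n P} // translation_equiv)"

end

theory Submission
  imports Defs "HOL-Library.Product_Lexorder"
begin

lemma adjF: "tri_adj (x,y,False) d \<longleftrightarrow> d \<in> {(x, y, True), (x - 1, y, True), (x, y - 1, True)}"
  by (simp add: tri_adj_def)
lemma adjT: "tri_adj (x,y,True) d \<longleftrightarrow> d \<in> {(x, y, False), (x + 1, y, False), (x, y + 1, False)}"
  by (simp add: tri_adj_def)

lemma adj_sym: "tri_adj a b \<Longrightarrow> tri_adj b a"
  by (cases a; cases b) (auto simp: tri_adj_def split: bool.splits)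

lemma adj_irrefl: "\<not> tri_adj a a"
  by (cases a) (auto simp: tri_adj_def split: bool.splits)

definition sh :: "int \<times> int \<Rightarrow> cell \<Rightarrow> cell" where
  "sh v c = (fst c + fst v, fst (snd c) + snd v, snd (snd c))"

lemma translate_sh: "translate v P = sh v ` P"
  unfolding translate_def sh_def by (rule image_cong) auto

lemma sh_adj: "tri_adj (sh v a) (sh v b) \<longleftrightarrow> tri_adj a b"
  by (cases a; cases b) (auto simp: tri_adj_def sh_def split: bool.splits)

lemma sh_inj: "inj (sh v)"
  by (auto simp: inj_def sh_def prod_eq_iff)

lemma sh_sh: "sh v (sh w c) = sh (fst v + fst w, snd v + snd w) c"
  by (simp add: sh_def)

lemma sh_0: "sh (0,0) c = c"
  by (simp add: sh_def)

definition sig :: "cell \<Rightarrow> cell" where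
  "sig c = (- fst c, - fst (snd c), \<not> snd (snd c))"

lemma sig_sig: "sig (sig c) = c" by (simp add: sig_def)
lemma sig_inj: "inj sig" by (metis injI sig_sig)

lemma sig_adj: "tri_adj (sig a) (sig b) \<longleftrightarrow> tri_adj a b"
  by (cases a; cases b) (auto simp: tri_adj_def sig_def split: bool.splits)

definition key :: "cell \<Rightarrow> int \<times> int" where
  "key c = (fst (snd c), 2 * fst c + (if snd (snd c) then 1 else 0))"

lemma key_inj: "inj key"
  unfolding inj_def key_def by (auto simp: prod_eq_iff split: if_splits; presburger)

lemma key_sh: "key (sh v c) = (fst (key c) + snd v, snd (key c) + 2 * fst v)"
  by (simp add: key_def sh_def)

lemma key_sh_le: "key (sh v a) \<le> key (sh v b) \<longleftrightarrow> key a \<le> key b"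
  by (simp add: key_sh less_eq_prod_def)

lemma key_sh_less: "key (sh v a) < key (sh v b) \<longleftrightarrow> key a < key b"
  by (simp add: key_sh less_prod_def)

lemma key_sig_le: "key (sig a) \<le> key (sig b) \<longleftrightarrow> key b \<le> key a"
  by (auto simp add: key_def sig_def less_eq_prod_def)

definition ismax :: "cell set \<Rightarrow> cell \<Rightarrow> bool" where
  "ismax P c \<longleftrightarrow> c \<in> P \<and> (\<forall>d\<in>P. key d \<le> key c)"
definition ismin :: "cell set \<Rightarrow> cell \<Rightarrow> bool" where
  "ismin P c \<longleftrightarrow> c \<in> P \<and> (\<forall>d\<in>P. key c \<le> key d)"

lemma ex_max: assumes "finite P" "P \<noteq> {}" shows "\<exists>c. ismax P c"
proof -
  have "Max (key ` P) \<in> key ` P" using assms by simp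
  then obtain c where c: "c \<in> P" "key c = Max (key ` P)" by auto
  have "\<forall>d\<in>P. key d \<le> key c" using c assms by simp
  then show ?thesis using c unfolding ismax_def by blast
qed

lemma max_unique: "ismax P c \<Longrightarrow> ismax P d \<Longrightarrow> c = d"
  unfolding ismax_def using key_inj by (meson antisym injD)

lemma ismax_sh: "ismax P c \<Longrightarrow> ismax (sh v ` P) (sh v c)"
  unfolding ismax_def by (auto simp: key_sh_le)

lemma ismax_sig: "ismax P c \<Longrightarrow> ismin (sig ` P) (sig c)"
  unfolding ismax_def ismin_def by (auto simp: key_sig_le)

lemma ismin_sig: "ismin P c \<Longrightarrow> ismax (sig ` P) (sig c)"
  unfolding ismax_def ismin_def by (auto simp: key_sig_le)

definition rel :: "cell set \<Rightarrow> (cell \<times> cell) set" where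
  "rel P = {(a, b). a \<in> P \<and> b \<in> P \<and> tri_adj a b}"

lemma ec_def: "edge_connected P \<longleftrightarrow> (\<forall>c\<in>P. \<forall>d\<in>P. (c, d) \<in> (rel P)\<^sup>*)"
  unfolding edge_connected_def rel_def by simp

lemma rel_mono: "P \<subseteq> Q \<Longrightarrow> (rel P)\<^sup>* \<subseteq> (rel Q)\<^sup>*"
  by (rule rtrancl_mono) (auto simp: rel_def)

lemma rel_sym: "(a, b) \<in> (rel P)\<^sup>* \<Longrightarrow> (b, a) \<in> (rel P)\<^sup>*"
proof -
  have "sym (rel P)" by (auto simp: sym_def rel_def adj_sym)
  then show "(a, b) \<in> (rel P)\<^sup>* \<Longrightarrow> (b, a) \<in> (rel P)\<^sup>*"
    by (meson rtrancl_converseD sym_conv_converse_eq sym_rtrancl symD)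
qed

lemma ec_image:
  assumes "edge_connected P" "\<And>a b. tri_adj (f a) (f b) \<longleftrightarrow> tri_adj a b"
  shows "edge_connected (f ` P)"
proof -
  have *: "(f a, f b) \<in> (rel (f ` P))\<^sup>*" if "(a, b) \<in> (rel P)\<^sup>*" for a b
    using that
  proof (induction rule: rtrancl_induct)
    case base then show ?case by simp
  next
    case (step b c)
    then have "(f b, f c) \<in> rel (f ` P)" using assms(2) by (auto simp: rel_def)
    then show ?case using step.IH by (meson rtrancl.rtrancl_into_rtrancl)
  qed
  show ?thesis using assms(1) * unfolding ec_def by blast
qed

lemma poly_image:
  assumes "polyiamond n P" "inj f" "\<And>a b. tri_adj (f a) (f b) \<longleftrightarrow> tri_adj a b"
  shows "polyiamond n (f ` P)"
  using assms ec_image[of P f] by (auto simp: polyiamond_def card_image inj_on_subset)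

lemma ec_union:
  assumes "edge_connected P" "edge_connected Q" "p \<in> P" "q \<in> Q" "tri_adj p q"
  shows "edge_connected (P \<union> Q)"
proof -
  have P: "(rel P)\<^sup>* \<subseteq> (rel (P \<union> Q))\<^sup>*" and Q: "(rel Q)\<^sup>* \<subseteq> (rel (P \<union> Q))\<^sup>*"
    by (simp_all add: rel_mono)
  have pq: "(p, q) \<in> (rel (P \<union> Q))\<^sup>*" using assms by (auto simp: rel_def)
  have "(c, d) \<in> (rel (P \<union> Q))\<^sup>*" if "c \<in> P \<union> Q" "d \<in> P \<union> Q" for c d
  proof -
    have a: "(c, p) \<in> (rel (P \<union> Q))\<^sup>* \<and> (p, c) \<in> (rel (P \<union> Q))\<^sup>*"
    proof (cases "c \<in> P")
      case True then show ?thesis using assms(1,3) P unfolding ec_def by blast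
    next
      case False
      then have "c \<in> Q" using that by blast
      then have "(c, q) \<in> (rel (P \<union> Q))\<^sup>*" "(q, c) \<in> (rel (P \<union> Q))\<^sup>*"
        using assms(2,4) Q unfolding ec_def by blast+
      then show ?thesis using pq rel_sym by (meson rtrancl_trans)
    qed
    have b: "(d, p) \<in> (rel (P \<union> Q))\<^sup>* \<and> (p, d) \<in> (rel (P \<union> Q))\<^sup>*"
    proof (cases "d \<in> P")
      case True then show ?thesis using assms(1,3) P unfolding ec_def by blast
    next
      case False
      then have "d \<in> Q" using that by blast
      then have "(d, q) \<in> (rel (P \<union> Q))\<^sup>*" "(q, d) \<in> (rel (P \<union> Q))\<^sup>*"
        using assms(2,4) Q unfolding ec_def by blast+
      then show ?thesis using pq rel_sym by (meson rtrancl_trans)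
    qed
    show ?thesis using a b by (meson rtrancl_trans)
  qed
  then show ?thesis unfolding ec_def by blast
qed

lemma ec_single: "edge_connected {c}"
  unfolding ec_def by simp

lemma ec_leaf:
  assumes "edge_connected P" "c \<in> P" "u \<in> P" "u \<noteq> c" "\<And>d. d \<in> P \<Longrightarrow> tri_adj c d \<Longrightarrow> d = u"
  shows "edge_connected (P - {c})"
proof -
  have *: "(a, if b = c then u else b) \<in> (rel (P - {c}))\<^sup>*"
    if "(a, b) \<in> (rel P)\<^sup>*" "a \<noteq> c" for a b
    using that(1)
  proof (induction rule: rtrancl_induct)
    case base then show ?case using that(2) by simp
  next
    case (step b e)
    have be: "b \<in> P" "e \<in> P" "tri_adj b e" using step.hyps(2) by (auto simp: rel_def)
    show ?case
    proof (cases "e = c")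
      case True
      then have "b = u" using assms(5) be adj_sym by blast
      moreover have "b \<noteq> c" using be True adj_irrefl by blast
      ultimately show ?thesis using step.IH True by simp
    next
      case False
      show ?thesis
      proof (cases "b = c")
        case True
        then have "e = u" using assms(5) be by blast
        then show ?thesis using step.IH True False by simp
      next
        case False2: False
        then have "(b, e) \<in> rel (P - {c})" using be False by (auto simp: rel_def)
        then show ?thesis using step.IH False False2 by (simp add: rtrancl.rtrancl_into_rtrancl)
      qed
    qed
  qed
  show ?thesis unfolding ec_def
  proof (intro ballI)
    fix a b assume "a \<in> P - {c}" "b \<in> P - {c}"
    then show "(a, b) \<in> (rel (P - {c}))\<^sup>*" using *[of a b] assms(1) unfolding ec_def by auto
  qed
qed

lemma ec_nbr:
  assumes "edge_connected P" "c \<in> P" "d \<in> P" "c \<noteq> d"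
  shows "\<exists>e\<in>P. tri_adj c e"
proof -
  have "(c, d) \<in> (rel P)\<^sup>*" using assms unfolding ec_def by blast
  then show ?thesis using assms(4)
    by (induction rule: converse_rtrancl_induct) (auto simp: rel_def)
qed

lemma adj_bound: "tri_adj a b \<Longrightarrow> \<bar>fst a - fst b\<bar> \<le> 1 \<and> \<bar>fst (snd a) - fst (snd b)\<bar> \<le> 1"
  by (cases a; cases b) (auto simp: tri_adj_def split: bool.splits)

lemma ec_interval:
  assumes "(c, d) \<in> (rel P)\<^sup>*" "c \<in> P" "\<And>a b. tri_adj a b \<Longrightarrow> \<bar>g a - g b\<bar> \<le> (1::int)"
  shows "{min (g c) (g d) .. max (g c) (g d)} \<subseteq> g ` P"
  using assms(1)
proof (induction rule: rtrancl_induct)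
  case base then show ?case using assms(2) by auto
next
  case (step b e)
  have be: "e \<in> P" "\<bar>g b - g e\<bar> \<le> 1" using step.hyps(2) assms(3) by (auto simp: rel_def)
  show ?case
  proof
    fix t assume t: "t \<in> {min (g c) (g e) .. max (g c) (g e)}"
    show "t \<in> g ` P"
    proof (cases "t = g e")
      case True then show ?thesis using be by auto
    next
      case False
      have "min (g c) (g e) \<le> t" "t \<le> max (g c) (g e)" using t by auto
      then have "min (g c) (g b) \<le> t \<and> t \<le> max (g c) (g b)" using False be(2)
        by (simp add: abs_le_iff min_def max_def split: if_splits) linarith?
      then have "t \<in> {min (g c) (g b) .. max (g c) (g b)}" by simp
      then show ?thesis using step.IH by blast
    qed
  qed
qed

lemma poly_bound:
  assumes "polyiamond n P" "c \<in> P" "d \<in> P" "\<And>a b. tri_adj a b \<Longrightarrow> \<bar>g a - g b\<bar> \<le> (1::int)"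
  shows "\<bar>g d - g c\<bar> < int n"
proof -
  have fin: "finite P" and cn: "card P = n" and ec: "edge_connected P"
    using assms(1) by (auto simp: polyiamond_def)
  have "(c, d) \<in> (rel P)\<^sup>*" using ec assms(2,3) unfolding ec_def by blast
  then have sub: "{min (g c) (g d) .. max (g c) (g d)} \<subseteq> g ` P"
    by (rule ec_interval[OF _ assms(2) assms(4)])
  have "card {min (g c) (g d) .. max (g c) (g d)} \<le> card (g ` P)"
    by (rule card_mono) (use fin sub in auto)
  also have "\<dots> \<le> n" using fin cn card_image_le by blast
  finally have le: "card {min (g c) (g d) .. max (g c) (g d)} \<le> n" .
  have "int (card {min (g c) (g d) .. max (g c) (g d)}) = max (g c) (g d) - min (g c) (g d) + 1"
    by simp
  then show ?thesis using le by linarith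
qed

definition N :: "nat \<Rightarrow> cell set set" where
  "N n = {P. polyiamond n P \<and> (ismax P (0,0,False) \<or> ismax P (0,0,True))}"

lemma N_finite: "finite (N n)"
proof -
  have "N n \<subseteq> Pow ({- int n .. int n} \<times> {- int n .. int n} \<times> UNIV)"
  proof
    fix P assume P: "P \<in> N n"
    then obtain t where t: "ismax P (0,0,t)" "polyiamond n P" unfolding N_def by blast
    then have o: "(0,0,t) \<in> P" unfolding ismax_def by blast
    have "d \<in> {- int n .. int n} \<times> {- int n .. int n} \<times> UNIV" if "d \<in> P" for d
    proof -
      have "\<bar>fst d - fst (0::int,0::int,t)\<bar> < int n"
        by (rule poly_bound[OF t(2) o that]) (use adj_bound in blast)
      moreover have "\<bar>fst (snd d) - fst (snd (0::int,0::int,t))\<bar> < int n"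
        by (rule poly_bound[OF t(2) o that, where g="\<lambda>c. fst (snd c)"]) (use adj_bound in blast)
      ultimately show ?thesis by (cases d) (simp add: abs_less_iff)
    qed
    then show "P \<in> Pow ({- int n .. int n} \<times> {- int n .. int n} \<times> UNIV)" by blast
  qed
  moreover have "finite (Pow ({- int n .. int n} \<times> {- int n .. int n} \<times> (UNIV :: bool set)))" by simp
  ultimately show ?thesis by (rule finite_subset)
qed

lemma class_eq: "translation_equiv `` {P} = {Q. \<exists>v. Q = sh v ` P}"
  unfolding translation_equiv_def by (simp add: translate_sh Image_singleton)

lemma sh_image_sh: "sh v ` sh w ` P = sh (fst v + fst w, snd v + snd w) ` P"
  by (auto simp: image_image sh_sh)

lemma class_sh: "translation_equiv `` {sh w ` P} = translation_equiv `` {P}"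
proof -
  have "(\<exists>v. Q = sh v ` sh w ` P) \<longleftrightarrow> (\<exists>v. Q = sh v ` P)" for Q
  proof
    assume "\<exists>v. Q = sh v ` sh w ` P"
    then show "\<exists>v. Q = sh v ` P" by (auto simp: sh_image_sh)
  next
    assume "\<exists>v. Q = sh v ` P"
    then obtain v where "Q = sh v ` P" by blast
    then have "Q = sh (fst v - fst w, snd v - snd w) ` sh w ` P" by (simp add: sh_image_sh)
    then show "\<exists>v. Q = sh v ` sh w ` P" by blast
  qed
  then show ?thesis unfolding class_eq by blast
qed

lemma poly_sh: "polyiamond n P \<Longrightarrow> polyiamond n (sh v ` P)"
  by (rule poly_image) (auto simp: sh_inj sh_adj)

lemma T_eq: assumes "n \<ge> 1" shows "T n = card (N n)" and "finite ({P. polyiamond n P} // translation_equiv)"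
proof -
  let ?r = translation_equiv
  have bij: "bij_betw (\<lambda>P. ?r `` {P}) (N n) ({P. polyiamond n P} // ?r)"
    unfolding bij_betw_def
  proof
    show "inj_on (\<lambda>P. ?r `` {P}) (N n)"
    proof (rule inj_onI)
      fix P1 P2 assume P1: "P1 \<in> N n" and P2: "P2 \<in> N n" and eq: "?r `` {P1} = ?r `` {P2}"
      have "P2 \<in> ?r `` {P2}" unfolding class_eq by (rule CollectI, rule exI[of _ "(0,0)"]) (simp add: sh_0)
      then have "P2 \<in> {Q. \<exists>v. Q = sh v ` P1}" using eq unfolding class_eq by simp
      then obtain v where v: "P2 = sh v ` P1" by blast
      obtain t1 where t1: "ismax P1 (0,0,t1)" using P1 unfolding N_def by blast
      obtain t2 where t2: "ismax P2 (0,0,t2)" using P2 unfolding N_def by blast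
      have "ismax P2 (sh v (0,0,t1))" using ismax_sh[OF t1] v by simp
      then have "sh v (0,0,t1) = (0,0,t2)" using t2 by (rule max_unique)
      then have "v = (0,0)" by (simp add: sh_def prod_eq_iff)
      then show "P1 = P2" using v by (simp add: sh_0)
    qed
  next
    show "(\<lambda>P. ?r `` {P}) ` N n = {P. polyiamond n P} // ?r"
    proof
      show "(\<lambda>P. ?r `` {P}) ` N n \<subseteq> {P. polyiamond n P} // ?r"
        by (auto simp: N_def intro: quotientI)
    next
      show "{P. polyiamond n P} // ?r \<subseteq> (\<lambda>P. ?r `` {P}) ` N n"
      proof
        fix X assume "X \<in> {P. polyiamond n P} // ?r"
        then obtain P where P: "polyiamond n P" "X = ?r `` {P}" by (auto elim: quotientE)
        then have "finite P" "P \<noteq> {}" using assms unfolding polyiamond_def by auto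
        then obtain c where c: "ismax P c" using ex_max by blast
        obtain a b t where abt: "c = (a, b, t)" by (cases c)
        let ?P = "sh (-a, -b) ` P"
        have "ismax ?P (sh (-a,-b) c)" using ismax_sh[OF c] .
        then have "ismax ?P (0,0,t)" using abt by (simp add: sh_def)
        moreover have "polyiamond n ?P" by (rule poly_sh[OF P(1)])
        ultimately have "?P \<in> N n" unfolding N_def by (cases t) simp_all
        moreover have "X = ?r `` {?P}" using P(2) class_sh by simp
        ultimately show "X \<in> (\<lambda>P. ?r `` {P}) ` N n" by blast
      qed
    qed
  qed
  show "T n = card (N n)" unfolding T_def using bij_betw_same_card[OF bij] by simp
  show "finite ({P. polyiamond n P} // translation_equiv)"
    using bij_betw_finite[OF bij] N_finite by blast
qed

abbreviation "u0 \<equiv> ((0::int), (0::int), False)"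
abbreviation "d0 \<equiv> ((0::int), (0::int), True)"

definition A :: "nat \<Rightarrow> cell set set" where "A n = {P. polyiamond n P \<and> ismax P u0}"
definition B :: "nat \<Rightarrow> cell set set" where "B n = {P. polyiamond n P \<and> ismax P d0}"
definition A' :: "nat \<Rightarrow> cell set set" where "A' n = {P. polyiamond n P \<and> ismin P d0}"
definition B' :: "nat \<Rightarrow> cell set set" where "B' n = {P. polyiamond n P \<and> ismin P u0}"

lemma N_split: "N n = A n \<union> B n" and AB_disj: "A n \<inter> B n = {}"
  and A_fin: "finite (A n)" and B_fin: "finite (B n)"
proof -
  show "N n = A n \<union> B n" unfolding N_def A_def B_def by blast
  have "\<not> (ismax P u0 \<and> ismax P d0)" for P using max_unique by blast
  then show "A n \<inter> B n = {}" unfolding A_def B_def by blast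
  show "finite (A n)" "finite (B n)" using N_finite[of n] unfolding N_def A_def B_def
    by (auto elim: finite_subset[rotated])
qed

lemma card_N: "card (N n) = card (A n) + card (B n)"
  using N_split AB_disj A_fin B_fin by (simp add: card_Un_disjoint)

lemma poly_sig: "polyiamond n P \<Longrightarrow> polyiamond n (sig ` P)"
  by (rule poly_image) (auto simp: sig_inj sig_adj)

lemma sig_img_img: "sig ` sig ` P = P"
  by (simp add: image_image sig_sig)

lemma card_sig_family: "card ((\<lambda>P. sig ` P) ` X) = card X"
proof (rule card_image)
  show "inj_on (\<lambda>P. sig ` P) X" by (rule inj_onI) (metis sig_img_img)
qed

lemma sig_u0: "sig u0 = d0" and sig_d0: "sig d0 = u0" by (simp_all add: sig_def)

lemma A'_eq: "A' n = (\<lambda>P. sig ` P) ` A n"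
proof
  show "A' n \<subseteq> (\<lambda>P. sig ` P) ` A n"
  proof
    fix Q assume Q: "Q \<in> A' n"
    then have "sig ` Q \<in> A n" unfolding A'_def A_def using poly_sig ismin_sig[of Q d0] sig_d0 by auto
    moreover have "Q = sig ` sig ` Q" by (simp add: sig_img_img)
    ultimately show "Q \<in> (\<lambda>P. sig ` P) ` A n" by blast
  qed
next
  show "(\<lambda>P. sig ` P) ` A n \<subseteq> A' n"
    unfolding A'_def A_def using poly_sig ismax_sig[of _ u0] sig_u0 by auto
qed

lemma B'_eq: "B' n = (\<lambda>P. sig ` P) ` B n"
proof
  show "B' n \<subseteq> (\<lambda>P. sig ` P) ` B n"
  proof
    fix Q assume Q: "Q \<in> B' n"
    then have "sig ` Q \<in> B n" unfolding B'_def B_def using poly_sig ismin_sig[of Q u0] sig_u0 by auto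
    moreover have "Q = sig ` sig ` Q" by (simp add: sig_img_img)
    ultimately show "Q \<in> (\<lambda>P. sig ` P) ` B n" by blast
  qed
next
  show "(\<lambda>P. sig ` P) ` B n \<subseteq> B' n"
    unfolding B'_def B_def using poly_sig ismax_sig[of _ d0] sig_d0 by auto
qed

lemma card_A': "card (A' n) = card (A n)" by (simp add: A'_eq card_sig_family)
lemma card_B': "card (B' n) = card (B n)" by (simp add: B'_eq card_sig_family)
lemma A'_fin: "finite (A' n)" by (simp add: A'_eq A_fin)
lemma B'_fin: "finite (B' n)" by (simp add: B'_eq B_fin)

lemma ismin_sh: "ismin P c \<Longrightarrow> ismin (sh v ` P) (sh v c)"
  unfolding ismin_def by (auto simp: key_sh_le)

definition w :: "cell set \<Rightarrow> int \<times> int" where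
  "w P = (if d0 \<in> P then (1,0) else (0,0))"

definition F :: "cell set \<Rightarrow> cell set \<Rightarrow> cell set" where
  "F P Q = P \<union> sh (w P) ` Q"

definition S :: "nat \<Rightarrow> nat \<Rightarrow> (cell set \<times> cell set) set" where
  "S l m = A l \<times> A' m \<union> B l \<times> B' m"

lemma glue_props:
  assumes "(P, Q) \<in> S l m"
  shows "\<forall>a\<in>P. \<forall>b\<in>sh (w P) ` Q. key a < key b"
    and "polyiamond (l + m) (F P Q)"
    and "ismax P u0 \<or> ismax P d0"
    and "card P = l"
proof -
  have "(P \<in> A l \<and> Q \<in> A' m) \<or> (P \<in> B l \<and> Q \<in> B' m)" using assms unfolding S_def by blast
  then have "(\<forall>a\<in>P. \<forall>b\<in>sh (w P) ` Q. key a < key b) \<and> polyiamond (l + m) (F P Q)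
     \<and> (ismax P u0 \<or> ismax P d0) \<and> card P = l"
  proof
    assume h: "P \<in> A l \<and> Q \<in> A' m"
    then have P: "polyiamond l P" "ismax P u0" and Q: "polyiamond m Q" "ismin Q d0"
      unfolding A_def A'_def by auto
    have "d0 \<notin> P" using P(2) unfolding ismax_def by (auto simp: key_def)
    then have wP: "sh (w P) ` Q = Q" by (simp add: w_def sh_0)
    have lt: "\<forall>a\<in>P. \<forall>b\<in>Q. key a < key b"
    proof (intro ballI)
      fix a b assume "a \<in> P" "b \<in> Q"
      then have "key a \<le> key u0" "key d0 \<le> key b" using P(2) Q(2) unfolding ismax_def ismin_def by auto
      moreover have "key u0 < key d0" by (simp add: key_def)
      ultimately show "key a < key b" by order
    qed
    then have disj: "P \<inter> Q = {}" by auto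
    have "edge_connected (P \<union> Q)"
      by (rule ec_union[of P Q u0 d0]) (use P Q in \<open>auto simp: polyiamond_def ismax_def ismin_def adjF\<close>)
    moreover have "card (P \<union> Q) = l + m" using P Q disj by (simp add: polyiamond_def card_Un_disjoint)
    moreover have "finite (P \<union> Q)" using P Q by (simp add: polyiamond_def)
    ultimately have "polyiamond (l + m) (F P Q)" by (simp add: F_def wP polyiamond_def)
    then show ?thesis using lt wP P by (simp add: polyiamond_def)
  next
    assume h: "P \<in> B l \<and> Q \<in> B' m"
    then have P: "polyiamond l P" "ismax P d0" and Q: "polyiamond m Q" "ismin Q u0"
      unfolding B_def B'_def by auto
    have "d0 \<in> P" using P(2) unfolding ismax_def by auto
    then have wP: "w P = (1,0)" by (simp add: w_def)
    let ?Q = "sh (1,0) ` Q"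
    have Q': "polyiamond m ?Q" "ismin ?Q (1,0,False)"
    proof -
      show "polyiamond m ?Q" using poly_sh[OF Q(1)] .
      have "sh (1,0) u0 = (1,0,False)" by (simp add: sh_def)
      then show "ismin ?Q (1,0,False)" using ismin_sh[OF Q(2), of "(1,0)"] by simp
    qed
    have lt: "\<forall>a\<in>P. \<forall>b\<in>?Q. key a < key b"
    proof (intro ballI)
      fix a b assume "a \<in> P" "b \<in> ?Q"
      then have "key a \<le> key d0" "key (1,0,False) \<le> key b" using P(2) Q'(2) unfolding ismax_def ismin_def by auto
      moreover have "key d0 < key (1,0,False)" by (simp add: key_def)
      ultimately show "key a < key b" by order
    qed
    then have disj: "P \<inter> ?Q = {}" by auto
    have "edge_connected (P \<union> ?Q)"
      by (rule ec_union[of P ?Q d0 "(1,0,False)"]) (use P Q' in \<open>auto simp: polyiamond_def ismax_def ismin_def adjT\<close>)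
    moreover have "card (P \<union> ?Q) = l + m" using P Q' disj by (simp add: polyiamond_def card_Un_disjoint)
    moreover have "finite (P \<union> ?Q)" using P Q' by (simp add: polyiamond_def)
    ultimately have "polyiamond (l + m) (F P Q)" by (simp add: F_def wP polyiamond_def)
    then show ?thesis using lt wP P by (simp add: polyiamond_def)
  qed
  then show "\<forall>a\<in>P. \<forall>b\<in>sh (w P) ` Q. key a < key b" "polyiamond (l + m) (F P Q)"
    "ismax P u0 \<or> ismax P d0" "card P = l" by auto
qed

lemma lower_unique:
  assumes "finite R" "L1 \<subseteq> R" "L2 \<subseteq> R" "card L1 = card L2"
    "\<forall>a\<in>L1. \<forall>b\<in>R - L1. key a < key b" "\<forall>a\<in>L2. \<forall>b\<in>R - L2. key a < key b"
  shows "L1 = L2"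
proof (rule ccontr)
  assume ne: "L1 \<noteq> L2"
  have f1: "finite L1" "finite L2" using assms(1-3) finite_subset by auto
  have "\<not> L1 \<subseteq> L2" using card_subset_eq[OF f1(2) _ assms(4)] ne by blast
  then obtain a where a: "a \<in> L1" "a \<notin> L2" by blast
  have "\<not> L2 \<subseteq> L1" using card_subset_eq[OF f1(1) _ assms(4)[symmetric]] ne by blast
  then obtain b where b: "b \<in> L2" "b \<notin> L1" by blast
  have "key a < key b" using assms(5) a b assms(3) by blast
  moreover have "key b < key a" using assms(6) a b assms(2) by blast
  ultimately show False by simp
qed

lemma F_inj:
  assumes p1: "(P1, Q1) \<in> S l m" and p2: "(P2, Q2) \<in> S l m"
    and eq: "translation_equiv `` {F P1 Q1} = translation_equiv `` {F P2 Q2}"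
  shows "(P1, Q1) = (P2, Q2)"
proof -
  note g1 = glue_props[OF p1] and g2 = glue_props[OF p2]
  let ?R1 = "F P1 Q1" and ?R2 = "F P2 Q2"
  have "?R2 \<in> translation_equiv `` {?R2}" unfolding class_eq
    by (rule CollectI, rule exI[of _ "(0,0)"]) (simp add: sh_0)
  then have "?R2 \<in> {Q. \<exists>v. Q = sh v ` ?R1}" using eq unfolding class_eq by simp
  then obtain v where v: "?R2 = sh v ` ?R1" by blast
  have fin2: "finite ?R2" using g2(2) by (simp add: polyiamond_def)
  have d1: "?R1 - P1 = sh (w P1) ` Q1" using g1(1) unfolding F_def by auto
  have d2: "?R2 - P2 = sh (w P2) ` Q2" using g2(1) unfolding F_def by auto
  have L: "sh v ` P1 = P2"
  proof (rule lower_unique[OF fin2])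
    show "sh v ` P1 \<subseteq> ?R2" using v unfolding F_def by auto
    show "P2 \<subseteq> ?R2" unfolding F_def by auto
    have "finite P1" using g1(2) unfolding polyiamond_def F_def by auto
    then show "card (sh v ` P1) = card P2" using g1(4) g2(4) by (simp add: card_image inj_on_subset[OF sh_inj])
    have "?R2 - sh v ` P1 = sh v ` (?R1 - P1)" using v by (simp add: image_set_diff[OF sh_inj])
    then show "\<forall>a\<in>sh v ` P1. \<forall>b\<in>?R2 - sh v ` P1. key a < key b"
      using g1(1) d1 by (auto simp: key_sh_less)
    show "\<forall>a\<in>P2. \<forall>b\<in>?R2 - P2. key a < key b" using g2(1) d2 by auto
  qed
  obtain t1 where t1: "ismax P1 (0,0,t1)" using g1(3) by blast
  obtain t2 where t2: "ismax P2 (0,0,t2)" using g2(3) by blast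
  have "ismax (sh v ` P1) (sh v (0,0,t1))" by (rule ismax_sh[OF t1])
  then have "ismax P2 (sh v (0,0,t1))" using L by simp
  then have "sh v (0,0,t1) = (0,0,t2)" using t2 by (rule max_unique)
  then have v0: "v = (0,0)" by (simp add: sh_def prod_eq_iff)
  then have PP: "P1 = P2" using L by (simp add: sh_0)
  have "?R1 = ?R2" using v v0 by (simp add: sh_0)
  then have "sh (w P1) ` Q1 = sh (w P2) ` Q2" using d1 d2 PP by simp
  then have "Q1 = Q2" using PP by (simp add: inj_image_eq_iff[OF sh_inj])
  then show ?thesis using PP by simp
qed

lemma card_S: "card (S l m) = card (A l) * card (A' m) + card (B l) * card (B' m)"
proof -
  have "A l \<times> A' m \<inter> B l \<times> B' m = {}" using AB_disj by blast
  then show ?thesis unfolding S_def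
    by (simp add: card_Un_disjoint A_fin B_fin A'_fin B'_fin card_cartesian_product)
qed

lemma S_le: assumes "l + m \<ge> 1" shows "card (S l m) \<le> T (l + m)"
proof -
  let ?H = "\<lambda>(P, Q). translation_equiv `` {F P Q}"
  have "inj_on ?H (S l m)"
  proof (rule inj_onI)
    fix x y assume "x \<in> S l m" "y \<in> S l m" "?H x = ?H y"
    then show "x = y" using F_inj[of "fst x" "snd x" l m "fst y" "snd y"] by (cases x, cases y) simp
  qed
  moreover have "?H ` S l m \<subseteq> {P. polyiamond (l + m) P} // translation_equiv"
    using glue_props(2) by (auto intro: quotientI)
  moreover note T_eq(2)[OF assms]
  ultimately have "card (S l m) \<le> card ({P. polyiamond (l + m) P} // translation_equiv)"
    using card_inj_on_le by blast
  then show ?thesis unfolding T_def .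
qed

lemma poly_add:
  assumes "polyiamond k X" "e \<in> X" "tri_adj e c" "c \<notin> X"
  shows "polyiamond (Suc k) (X \<union> {c})"
proof -
  have "edge_connected (X \<union> {c})"
    by (rule ec_union[OF _ ec_single assms(2) _ assms(3)]) (use assms(1) in \<open>auto simp: polyiamond_def\<close>)
  then show ?thesis using assms by (simp add: polyiamond_def)
qed

abbreviation "dL \<equiv> (-1::int, 0::int, True)"
abbreviation "dB \<equiv> (0::int, -1::int, True)"
abbreviation "uN \<equiv> (-1::int, 1::int, False)"

lemma B_struct:
  assumes "P \<in> B n" "n \<ge> 2"
  shows "u0 \<in> P" "polyiamond (n - 1) (P - {d0})" "\<forall>e\<in>P - {d0}. key e \<le> (0,0)"
proof -
  have P: "polyiamond n P" "ismax P d0" using assms(1) unfolding B_def by auto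
  have fin: "finite P" and cn: "card P = n" and ec: "edge_connected P" using P(1) by (auto simp: polyiamond_def)
  have d0P: "d0 \<in> P" using P(2) unfolding ismax_def by auto
  have mx: "\<forall>e\<in>P. key e \<le> (0,1)" using P(2) unfolding ismax_def by (simp add: key_def)
  have nb: "e = u0" if "e \<in> P" "tri_adj d0 e" for e
  proof -
    have "e \<in> {u0, (1,0,False), (0,1,False)}" using that(2) by (simp add: adjT)
    moreover have "key e \<le> (0,1)" using mx that(1) by blast
    ultimately show ?thesis by (auto simp: key_def)
  qed
  have "P \<noteq> {d0}" using cn assms(2) by auto
  then obtain d where d: "d \<in> P" "d \<noteq> d0" using d0P by blast
  obtain e where e: "e \<in> P" "tri_adj d0 e" using ec_nbr[OF ec d0P d(1)] d(2) by metis
  then show u: "u0 \<in> P" using nb by blast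
  have "edge_connected (P - {d0})" by (rule ec_leaf[OF ec d0P u]) (use nb in auto)
  then show "polyiamond (n - 1) (P - {d0})" using fin cn d0P by (simp add: polyiamond_def)
  show "\<forall>e\<in>P - {d0}. key e \<le> (0,0)"
  proof
    fix e assume e: "e \<in> P - {d0}"
    then have "key e \<le> (0,1)" using mx by blast
    moreover have "key e \<noteq> key d0" using e injD[OF key_inj, of e d0] by blast
    moreover have "key d0 = (0,1)" by (simp add: key_def)
    ultimately show "key e \<le> (0,0)" by (cases "key e") auto
  qed
qed

definition Ha :: "cell set \<Rightarrow> cell set" where "Ha P = (P - {d0}) \<union> {dL}"
definition Hb :: "cell set \<Rightarrow> cell set" where "Hb P = (P - {d0}) \<union> {dB}"
definition Hc :: "cell set \<Rightarrow> cell set" where "Hc P = sh (1,-1) ` ((P - {d0}) \<union> {uN})"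

lemma Hab_in:
  assumes "P \<in> B n" "n \<ge> 2" "c \<in> {dL, dB}" "c \<notin> P"
  shows "(P - {d0}) \<union> {c} \<in> A n"
proof -
  note st = B_struct[OF assms(1,2)]
  have u: "u0 \<in> P - {d0}" using st(1) by simp
  have adj: "tri_adj u0 c" using assms(3) by (auto simp: adjF)
  have "c \<notin> P - {d0}" using assms(4) by simp
  from poly_add[OF st(2) u adj this] have "polyiamond (Suc (n - 1)) ((P - {d0}) \<union> {c})" .
  then have p: "polyiamond n ((P - {d0}) \<union> {c})" using assms(2) by simp
  have "key c \<le> (0,0)" using assms(3) by (auto simp: key_def)
  then have "ismax ((P - {d0}) \<union> {c}) u0" using st(3) u unfolding ismax_def by (auto simp: key_def)
  then show ?thesis using p unfolding A_def by simp
qed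

lemma Hc_in:
  assumes "P \<in> B n" "n \<ge> 2" "dL \<in> P"
  shows "Hc P \<in> A n"
proof -
  note st = B_struct[OF assms(1,2)]
  have u: "dL \<in> P - {d0}" using assms(3) by simp
  have adj: "tri_adj dL uN" by (simp add: adjT)
  have ku: "key uN = (1,-2)" by (simp add: key_def)
  have "uN \<notin> P - {d0}"
  proof
    assume "uN \<in> P - {d0}"
    then have "key uN \<le> (0,0)" using st(3) by blast
    then show False using ku by simp
  qed
  from poly_add[OF st(2) u adj this] have "polyiamond (Suc (n - 1)) ((P - {d0}) \<union> {uN})" .
  then have p: "polyiamond n ((P - {d0}) \<union> {uN})" using assms(2) by simp
  have "\<forall>e\<in>P - {d0}. key e \<le> key uN"
  proof
    fix e assume "e \<in> P - {d0}"
    then have "key e \<le> (0,0)" using st(3) by blast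
    moreover have "(0::int,0::int) \<le> (1,-2)" by simp
    ultimately show "key e \<le> key uN" using ku by order
  qed
  then have "ismax ((P - {d0}) \<union> {uN}) uN" unfolding ismax_def by auto
  then have "ismax (Hc P) (sh (1,-1) uN)" unfolding Hc_def by (rule ismax_sh)
  moreover have "sh (1,-1) uN = u0" by (simp add: sh_def)
  moreover have "polyiamond n (Hc P)" unfolding Hc_def by (rule poly_sh[OF p])
  ultimately show ?thesis unfolding A_def by simp
qed

lemma B_le: assumes "n \<ge> 1" shows "card (B n) \<le> 2 * card (A n)"
proof (cases "n = 1")
  case True
  have "B n \<subseteq> {{d0}}"
  proof
    fix P assume "P \<in> B n"
    then have "card P = 1" "d0 \<in> P" using True unfolding B_def polyiamond_def ismax_def by auto
    then obtain z where "P = {z}" using card_1_singletonE by blast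
    then show "P \<in> {{d0}}" using \<open>d0 \<in> P\<close> by simp
  qed
  then have "card (B n) \<le> card {{d0}}" by (rule card_mono[rotated]) simp
  then have "card (B n) \<le> 1" by simp
  moreover have "{u0} \<in> A n" using True unfolding A_def polyiamond_def ismax_def by (simp add: ec_single)
  then have "A n \<noteq> {}" by blast
  then have "card (A n) \<ge> 1" using A_fin[of n] by (simp add: Suc_le_eq card_gt_0_iff)
  ultimately show ?thesis by simp
next
  case False
  then have n2: "n \<ge> 2" using assms by simp
  let ?Ba = "{P \<in> B n. dL \<notin> P}" and ?Bb = "{P \<in> B n. dL \<in> P \<and> dB \<notin> P}"
    and ?Bc = "{P \<in> B n. dL \<in> P \<and> dB \<in> P}"
  let ?h = "\<lambda>P. if dL \<in> P then Hc P else Ha P"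
  have img1: "?h ` (?Ba \<union> ?Bc) \<subseteq> A n"
  proof
    fix X assume "X \<in> ?h ` (?Ba \<union> ?Bc)"
    then obtain P where P: "P \<in> ?Ba \<union> ?Bc" "X = ?h P" by blast
    show "X \<in> A n"
    proof (cases "dL \<in> P")
      case True then show ?thesis using P Hc_in[OF _ n2, of P] by simp
    next
      case False then show ?thesis using P Hab_in[OF _ n2, of P dL] unfolding Ha_def by simp
    qed
  qed
  have img2: "Hb ` ?Bb \<subseteq> A n"
  proof
    fix X assume "X \<in> Hb ` ?Bb"
    then obtain P where P: "P \<in> ?Bb" "X = Hb P" by blast
    then show "X \<in> A n" using Hab_in[OF _ n2, of P dB] unfolding Hb_def by simp
  qed
  have invc: "P = (sh (-1,1) ` Hc P - {uN}) \<union> {d0}" if "P \<in> B n" for P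
  proof -
    note st = B_struct[OF that n2]
    have "uN \<notin> P - {d0}"
    proof
      assume "uN \<in> P - {d0}"
      then have "key uN \<le> (0,0)" using st(3) by blast
      then show False by (simp add: key_def)
    qed
    moreover have "d0 \<in> P" using that unfolding B_def ismax_def by auto
    moreover have "sh (-1,1) ` Hc P = (P - {d0}) \<union> {uN}" unfolding Hc_def
      by (simp add: sh_image_sh sh_0 sh_sh)
    ultimately show ?thesis by auto
  qed
  have nc: "dL \<notin> Hc P" if "P \<in> B n" for P
  proof
    assume "dL \<in> Hc P"
    then have "sh (-1,1) dL \<in> sh (-1,1) ` Hc P" by blast
    also have "sh (-1,1) ` Hc P = (P - {d0}) \<union> {uN}" unfolding Hc_def
      by (simp add: sh_image_sh sh_0 sh_sh)
    finally have "(-2,1,True) \<in> P - {d0}" by (simp add: sh_def)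
    then have "key (-2::int,1::int,True) \<le> (0,0)" using B_struct(3)[OF that n2] by blast
    then show False by (simp add: key_def)
  qed
  have inj1: "inj_on ?h (?Ba \<union> ?Bc)"
  proof (rule inj_onI)
    fix P1 P2 assume P1: "P1 \<in> ?Ba \<union> ?Bc" and P2: "P2 \<in> ?Ba \<union> ?Bc" and eq: "?h P1 = ?h P2"
    have d01: "d0 \<in> P1" "d0 \<in> P2" using P1 P2 unfolding B_def ismax_def by auto
    show "P1 = P2"
    proof (cases "dL \<in> P1")
      case True
      show ?thesis
      proof (cases "dL \<in> P2")
        case True2: True
        have "P1 \<in> B n" "P2 \<in> B n" using P1 P2 by auto
        moreover have "Hc P1 = Hc P2" using eq True True2 by simp
        ultimately have "P1 = sh (-1,1) ` Hc P2 - {uN} \<union> {d0}" using invc[of P1] by simp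
        also have "\<dots> = P2" using invc[of P2] \<open>P2 \<in> B n\<close> by simp
        finally show ?thesis .
      next
        case False
        then have "dL \<in> ?h P2" unfolding Ha_def by simp
        then have "dL \<in> Hc P1" using eq True by simp
        then show ?thesis using nc P1 by blast
      qed
    next
      case False
      show ?thesis
      proof (cases "dL \<in> P2")
        case True
        have "dL \<in> ?h P1" using False unfolding Ha_def by simp
        then have "dL \<in> Hc P2" using eq True by simp
        then show ?thesis using nc P2 by blast
      next
        case False2: False
        then have "Ha P1 = Ha P2" using eq False by simp
        have inv: "Ha P - {dL} \<union> {d0} = P" if "d0 \<in> P" "dL \<notin> P" for P
          using that unfolding Ha_def by auto
        have "P1 = Ha P1 - {dL} \<union> {d0}" using inv[OF d01(1) False] by simp
        also have "\<dots> = Ha P2 - {dL} \<union> {d0}" using \<open>Ha P1 = Ha P2\<close> by simp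
        also have "\<dots> = P2" using inv[OF d01(2) False2] .
        finally show ?thesis .
      qed
    qed
  qed
  have inj2: "inj_on Hb ?Bb"
  proof (rule inj_onI)
    fix P1 P2 assume P1: "P1 \<in> ?Bb" and P2: "P2 \<in> ?Bb" and eq: "Hb P1 = Hb P2"
    have d01: "d0 \<in> P1" "d0 \<in> P2" using P1 P2 unfolding B_def ismax_def by auto
    have inv: "Hb P - {dB} \<union> {d0} = P" if "d0 \<in> P" "dB \<notin> P" for P
      using that unfolding Hb_def by auto
    have "dB \<notin> P1" "dB \<notin> P2" using P1 P2 by auto
    then have "P1 = Hb P1 - {dB} \<union> {d0}" "Hb P2 - {dB} \<union> {d0} = P2" using inv d01 by auto
    then show "P1 = P2" using eq by simp
  qed
  have c1: "card (?Ba \<union> ?Bc) \<le> card (A n)" using card_inj_on_le[OF inj1 img1 A_fin] .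
  have c2: "card ?Bb \<le> card (A n)" using card_inj_on_le[OF inj2 img2 A_fin] .
  have "B n = (?Ba \<union> ?Bc) \<union> ?Bb" by blast
  then have "card (B n) = card ((?Ba \<union> ?Bc) \<union> ?Bb)" by (rule arg_cong)
  also have "\<dots> \<le> card (?Ba \<union> ?Bc) + card ?Bb" by (rule card_Un_le)
  finally have "card (B n) \<le> card (?Ba \<union> ?Bc) + card ?Bb" .
  then show ?thesis using c1 c2 by simp
qed

lemma arith_key:
  fixes a b c d t :: real
  assumes "0 \<le> a" "0 \<le> b" "0 \<le> c" "0 \<le> d" "b \<le> 2 * a" "d \<le> 2 * c" "a * c + b * d \<le> t"
  shows "(1 / 3) * (a + b) * (c + d) \<le> t"
proof -
  have "0 \<le> (2 * a - b) * (2 * c - d)" using assms by simp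
  moreover have "0 \<le> b * d" using assms by simp
  moreover have "(2 * a - b) * (2 * c - d) = 4 * (a * c) - 2 * (a * d) - 2 * (b * c) + b * d"
    by (simp add: algebra_simps)
  moreover have "(a + b) * (c + d) = a * c + a * d + b * c + b * d"
    by (simp add: algebra_simps)
  ultimately have "(a + b) * (c + d) \<le> 3 * (a * c + b * d)"
    by argo
  then have "(1 / 3) * (a + b) * (c + d) \<le> a * c + b * d" by argo
  then show ?thesis using assms(7) by (rule order_trans)
qed

theorem proposition2:
  fixes l m :: nat
  assumes "l \<ge> 1" and "m \<ge> 1"
  shows "real (T (l + m)) \<ge> (1 / 3) * real (T l) * real (T m)"
proof -
  have Tl: "T l = card (A l) + card (B l)" using T_eq(1)[OF assms(1)] card_N by simp
  have Tm: "T m = card (A m) + card (B m)" using T_eq(1)[OF assms(2)] card_N by simp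
  have "card (A l) * card (A m) + card (B l) * card (B m) \<le> T (l + m)"
    using S_le[of l m] assms card_S[of l m] card_A'[of m] card_B'[of m] by simp
  then have s: "real (card (A l)) * real (card (A m)) + real (card (B l)) * real (card (B m)) \<le> real (T (l + m))"
    by (metis of_nat_add of_nat_le_iff of_nat_mult)
  have bl: "real (card (B l)) \<le> 2 * real (card (A l))" using B_le[OF assms(1)] by simp
  have bm: "real (card (B m)) \<le> 2 * real (card (A m))" using B_le[OF assms(2)] by simp
  have "(1 / 3) * (real (card (A l)) + real (card (B l))) * (real (card (A m)) + real (card (B m)))
      \<le> real (T (l + m))"
    by (rule arith_key[OF _ _ _ _ bl bm s]) simp_all
  then show ?thesis using Tl Tm by simp
qed

end
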